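(* Consider the coding-DNA embedding setting described in the context. Suppose the host codon $\mathbf{X}$ is uniformly distributed on $\mathcal{X}^3$ and $X'=\alpha(\mathbf{X})$, i.e. $p(x')=|\mathcal{S}_{x'}|/64$ for all $x'\in\mathcal{X}'$. Then the achievable rate is $$R_\mathrm{c}^{\alpha(\mathrm{unif})}=\widetilde{C}_\mathrm{nc}-H(X')\ \text{bits/codon},$$ where $\widetilde{C}_\mathrm{nc}=\max_{p(\mathbf{u})} I(\mathbf{Z}_{(m)};\mathbf{U})$, the maximum being taken without constraint over all distributions of $\mathbf{U}$ on $\mathcal{X}^3$ (the capacity of the codon mutation channel $\Pi^m\otimes\Pi^m\otimes\Pi^m$).
   Context: Let $\mathcal{X}=\{\mathrm{A},\mathrm{C},\mathrm{T},\mathrm{G}\}$ (DNA bases); codons are elements of $\mathcal{X}^3$. Let $\mathcal{X}'=\{$Ala, Arg, Asn, Asp, Cys, Gln, Glu, Gly, His, Ile, Leu, Lys, Met, Phe, Pro, Ser, Thr, Trp, Tyr, Val, Stp$\}$. The genetic code is the map $\alpha:\mathcal{X}^3\to\mathcal{X}'$ whose fibres $\mathcal{S}_{x'}=\{\mathbf{x}\in\mathcal{X}^3:\alpha(\mathbf{x})=x'\}$ are: Ala: GCA, GCC, GCT, GCG; Arg: AGA, AGG, CGA, CGC, CGT, CGG; Asn: AAC, AAT; Asp: GAC, GAT; Cys: TGC, TGT; Gln: CAA, CAG; Glu: GAA, GAG; Gly: GGA, GGC, GGT, GGG; His: CAC, CAT; Ile: ATA, ATC, ATT; Leu: CTA,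 CTC, CTT, CTG, TTA, TTG; Lys: AAA, AAG; Met: ATG; Phe: TTC, TTT; Pro: CCA, CCC, CCT, CCG; Ser: AGC, AGT, TCA, TCC, TCT, TCG; Thr: ACA, ACC, ACT, ACG; Trp: TGG; Tyr: TAC, TAT; Val: GTA, GTC, GTT, GTG; Stp: TAA, TAG, TGA. These 21 sets partition $\mathcal{X}^3$. Mutation channel (Kimura model): for parameters $q\in[0,1]$ and $\gamma\in[0,3/2]$, the $4\times4$ base transition matrix $\Pi=[p(Z=z|Y=y)]$ (rows/columns ordered A, C, T, G) has diagonal entries $1-q$, entries $(1-2\gamma/3)q$ for the pairs $\{\mathrm{A},\mathrm{G}\}$ and $\{\mathrm{C},\mathrm{T}\}$, and entries $\gamma q/3$ for all other off-diagonal pairs. After $m\ge1$ cascaded independent mutation stages, a codon $\mathbf{u}$ is mapped to a random codon $\mathbf{Z}_{(m)}$ through the $64\times64$ transition matrix $\Pi^m\otimes\Pi^m\otimes\Pi^m$ (bases mutate independently). Achievable rate: given a distribution $p(x')$ of the host amino acid $X'$ on $\mathcal{X}'$, consider conditional distributions $p(\mathbf{u}|x')$ supported on $\mathcal{S}_{x'}$, and let $\mathbf{U}$ be the codon with $p(\mathbf{u})=p(x')p(\mathbf{u}|x')$ for $\mathbf{u}\in\mathcal{S}_{x'}$; $\mathbf{U}$ is the channel input and $\mathbf{Z}_{(m)}$ the output. The achievable rate is $R_\mathrm{c}^{X'}=\max_{p(\mathbf{u}|x')} I(\mathbf{Z}_{(m)};\mathbf{U})-H(X')$ bits/codon (logarithms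 base 2); $R_\mathrm{c}^{\alpha(\mathrm{unif})}$ denotes this rate when $X'=\alpha(\mathbf{X})$ with $\mathbf{X}$ uniform on $\mathcal{X}^3$. *)

theory Defs
  imports Complex_Main
begin

datatype base = A | C | T | G

lemma UNIV_base: "(UNIV :: base set) = {A, C, T, G}"
  using base.exhaust by auto

instance base :: finite
  by standard (simp add: UNIV_base)

type_synonym codon = "base \<times> base \<times> base"

datatype amino = Ala | Arg | Asn | Asp | Cys | Gln | Glu | Gly | His | Ile | Leu
  | Lys | Met | Phe | Pro | Ser | Thr | Trp | Tyr | Val | Stp

lemma UNIV_amino: "(UNIV :: amino set) =
  {Ala, Arg, Asn, Asp, Cys, Gln, Glu, Gly, His, Ile, Leu,
   Lys, Met, Phe, Pro, Ser, Thr, Trp, Tyr, Val, Stp}"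
  using amino.exhaust by auto

instance amino :: finite
  by standard (simp add: UNIV_amino)

fun alpha :: "codon \<Rightarrow> amino" where
  "alpha (T, T, T) = Phe" | "alpha (T, T, C) = Phe" | "alpha (T, T, A) = Leu" | "alpha (T, T, G) = Leu"
| "alpha (C, T, _) = Leu"
| "alpha (A, T, T) = Ile" | "alpha (A, T, C) = Ile" | "alpha (A, T, A) = Ile" | "alpha (A, T, G) = Met"
| "alpha (G, T, _) = Val"
| "alpha (T, C, _) = Ser"
| "alpha (C, C, _) = Pro"
| "alpha (A, C, _) = Thr"
| "alpha (G, C, _) = Ala"
| "alpha (T, A, T) = Tyr" | "alpha (T, A, C) = Tyr" | "alpha (T, A, A) = Stp" | "alpha (T, A, G) = Stp"
| "alpha (C, A, T) = His" | "alpha (C, A, C) = His" | "alpha (C, A, A) = Gln" | "alpha (C, A, G) = Gln"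
| "alpha (A, A, T) = Asn" | "alpha (A, A, C) = Asn" | "alpha (A, A, A) = Lys" | "alpha (A, A, G) = Lys"
| "alpha (G, A, T) = Asp" | "alpha (G, A, C) = Asp" | "alpha (G, A, A) = Glu" | "alpha (G, A, G) = Glu"
| "alpha (T, G, T) = Cys" | "alpha (T, G, C) = Cys" | "alpha (T, G, A) = Stp" | "alpha (T, G, G) = Trp"
| "alpha (C, G, _) = Arg"
| "alpha (A, G, T) = Ser" | "alpha (A, G, C) = Ser" | "alpha (A, G, A) = Arg" | "alpha (A, G, G) = Arg"
| "alpha (G, G, _) = Gly"

definition fibre :: "amino \<Rightarrow> codon set" where
  "fibre x' = {u. alpha u = x'}"

definition kimura :: "real \<Rightarrow> real \<Rightarrow> base \<Rightarrow> base \<Rightarrow> real" where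
  "kimura q \<gamma> y z =
     (if y = z then 1 - q
      else if {y, z} = {A, G} \<or> {y, z} = {C, T} then (1 - 2 * \<gamma> / 3) * q
      else \<gamma> * q / 3)"

fun kimura_pow :: "real \<Rightarrow> real \<Rightarrow> nat \<Rightarrow> base \<Rightarrow> base \<Rightarrow> real" where
  "kimura_pow q \<gamma> 0 y z = (if y = z then 1 else 0)"
| "kimura_pow q \<gamma> (Suc n) y z = (\<Sum>w\<in>UNIV. kimura_pow q \<gamma> n y w * kimura q \<gamma> w z)"

definition codon_channel :: "real \<Rightarrow> real \<Rightarrow> nat \<Rightarrow> codon \<Rightarrow> codon \<Rightarrow> real" where
  "codon_channel q \<gamma> m u z =
     (case u of (u1, u2, u3) \<Rightarrow> case z of (z1, z2, z3) \<Rightarrow>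
        kimura_pow q \<gamma> m u1 z1 * kimura_pow q \<gamma> m u2 z2 * kimura_pow q \<gamma> m u3 z3)"

definition is_distr :: "('a::finite \<Rightarrow> real) \<Rightarrow> bool" where
  "is_distr p \<longleftrightarrow> (\<forall>x. 0 \<le> p x) \<and> (\<Sum>x\<in>UNIV. p x) = 1"

definition entropy2 :: "('a::finite \<Rightarrow> real) \<Rightarrow> real" where
  "entropy2 p = - (\<Sum>x\<in>UNIV. if p x = 0 then 0 else p x * log 2 (p x))"

text \<open>Mutual information I(Z;U) for input distribution p and channel W (W u z = p(z|u)).\<close>
definition mutual_info :: "('a::finite \<Rightarrow> real) \<Rightarrow> ('a \<Rightarrow> 'b::finite \<Rightarrow> real) \<Rightarrow> real" where
  "mutual_info p W =
     (\<Sum>u\<in>UNIV. \<Sum>z\<in>UNIV.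
        if p u * W u z = 0 then 0
        else p u * W u z * log 2 (W u z / (\<Sum>u'\<in>UNIV. p u' * W u' z)))"

definition admissible_cond :: "(amino \<Rightarrow> codon \<Rightarrow> real) \<Rightarrow> bool" where
  "admissible_cond c \<longleftrightarrow>
     (\<forall>x' u. 0 \<le> c x' u) \<and> (\<forall>x' u. u \<notin> fibre x' \<longrightarrow> c x' u = 0)
     \<and> (\<forall>x'. (\<Sum>u\<in>fibre x'. c x' u) = 1)"

definition induced_codon_distr :: "(amino \<Rightarrow> real) \<Rightarrow> (amino \<Rightarrow> codon \<Rightarrow> real) \<Rightarrow> codon \<Rightarrow> real" where
  "induced_codon_distr px c u = px (alpha u) * c (alpha u) u"

text \<open>R_c^{X'} = max_{p(u|x')} I(Z_(m);U) - H(X'); the maximum (attained, by compactness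
  and continuity) is written as a supremum.\<close>
definition achievable_rate :: "real \<Rightarrow> real \<Rightarrow> nat \<Rightarrow> (amino \<Rightarrow> real) \<Rightarrow> real" where
  "achievable_rate q \<gamma> m px =
     (SUP c\<in>{c. admissible_cond c}.
        mutual_info (induced_codon_distr px c) (codon_channel q \<gamma> m)) - entropy2 px"

definition capacity_nc :: "real \<Rightarrow> real \<Rightarrow> nat \<Rightarrow> real" where
  "capacity_nc q \<gamma> m =
     (SUP p\<in>{p :: codon \<Rightarrow> real. is_distr p}. mutual_info p (codon_channel q \<gamma> m))"

definition alpha_unif :: "amino \<Rightarrow> real" where
  "alpha_unif x' = real (card (fibre x')) / 64"

end

theory Submission
  imports Defs
begin

fun dx :: "base \<Rightarrow> base \<Rightarrow> base" where
  "dx A z = z"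
| "dx G A = G" | "dx G G = A" | "dx G C = T" | "dx G T = C"
| "dx C A = C" | "dx C C = A" | "dx C G = T" | "dx C T = G"
| "dx T A = T" | "dx T T = A" | "dx T G = C" | "dx T C = G"

lemma sum_base: "(\<Sum>x\<in>UNIV. f x) = f A + f C + f T + f G"
  by (simp add: UNIV_base add.assoc)

lemma kimura_dx: "kimura q g w z = kimura q g A (dx w z)"
  by (cases w; cases z) (auto simp: kimura_def doubleton_eq_iff)

lemma dx_inv: "dx y (dx y z) = z" by (cases y; cases z) auto
lemma dx_assoc: "dx (dx y v) z = dx v (dx y z)" by (cases y; cases v; cases z) auto

lemma kp_dx: "kimura_pow q g n y z = kimura_pow q g n A (dx y z)"
proof (induction n arbitrary: y z)
  case 0 then show ?case by (cases y; cases z) auto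
next
  case (Suc n)
  have "kimura_pow q g (Suc n) y z = (\<Sum>w\<in>UNIV. kimura_pow q g n A (dx y w) * kimura q g A (dx w z))"
    by (simp only: kimura_pow.simps Suc.IH[of y] kimura_dx[of q g _ z])
  also have "\<dots> = (\<Sum>v\<in>UNIV. kimura_pow q g n A v * kimura q g A (dx v (dx y z)))"
    by (rule sum.reindex_bij_witness[of _ "dx y" "dx y"]) (auto simp: dx_inv dx_assoc)
  also have "\<dots> = kimura_pow q g (Suc n) A (dx y z)"
    by (simp only: kimura_pow.simps kimura_dx[of q g _ "dx y z"])
  finally show ?case .
qed

lemma dx_comm: "dx y z = dx z y" by (cases y; cases z) auto

lemma kp_sym: "kimura_pow q g n y z = kimura_pow q g n z y"
  by (simp only: kp_dx[of q g n y z] kp_dx[of q g n z y] dx_comm[of y z])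

lemma kimura_nonneg: "0 \<le> q \<Longrightarrow> q \<le> 1 \<Longrightarrow> 0 \<le> g \<Longrightarrow> g \<le> 3/2 \<Longrightarrow> 0 \<le> kimura q g y z"
proof -
  assume h: "0 \<le> q" "q \<le> 1" "0 \<le> g" "g \<le> 3/2"
  have "0 \<le> (1 - 2 * g / 3) * q" using h by (intro mult_nonneg_nonneg) auto
  moreover have "0 \<le> g * q / 3" using h by simp
  ultimately show ?thesis using h unfolding kimura_def by auto
qed

lemma kimura_row: "(\<Sum>z\<in>UNIV. kimura q g y z) = 1"
  by (cases y) (simp_all add: sum_base kimura_def doubleton_eq_iff field_simps)

lemma kp_nonneg: "0 \<le> q \<Longrightarrow> q \<le> 1 \<Longrightarrow> 0 \<le> g \<Longrightarrow> g \<le> 3/2 \<Longrightarrow> 0 \<le> kimura_pow q g n y z"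
  by (induction n arbitrary: z) (auto intro!: sum_nonneg mult_nonneg_nonneg kimura_nonneg)

lemma kp_row: "(\<Sum>z\<in>UNIV. kimura_pow q g n y z) = 1"
proof (induction n)
  case 0 then show ?case by simp
next
  case (Suc n)
  have "(\<Sum>z\<in>UNIV. kimura_pow q g (Suc n) y z) = (\<Sum>w\<in>UNIV. kimura_pow q g n y w * (\<Sum>z\<in>UNIV. kimura q g w z))"
    unfolding kimura_pow.simps sum_distrib_left by (rule sum.swap)
  also have "\<dots> = 1" by (simp add: kimura_row Suc)
  finally show ?case .
qed


definition psi :: "real \<Rightarrow> real" where "psi x = (if x = 0 then 0 else x * log 2 x)"

lemma mi_formula:
  fixes W :: "'a::finite \<Rightarrow> 'b::finite \<Rightarrow> real" and p :: "'a \<Rightarrow> real"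
  assumes Wnn: "\<And>u z. 0 \<le> W u z" and K: "\<And>u. (\<Sum>z\<in>UNIV. psi (W u z)) = K"
    and p: "is_distr p"
  shows "mutual_info p W = K - (\<Sum>z\<in>UNIV. psi (\<Sum>u'\<in>UNIV. p u' * W u' z))"
proof -
  define r where "r z = (\<Sum>u'\<in>UNIV. p u' * W u' z)" for z
  have pnn: "\<And>u. 0 \<le> p u" and psum: "(\<Sum>u\<in>UNIV. p u) = 1" using p by (auto simp: is_distr_def)
  have trm: "(if p u * W u z = 0 then 0 else p u * W u z * log 2 (W u z / r z))
      = p u * psi (W u z) - p u * W u z * log 2 (r z)" for u z
  proof (cases "p u * W u z = 0")
    case True
    then have "p u = 0 \<or> W u z = 0" by simp
    then show ?thesis using True by (auto simp: psi_def)
  next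
    case False
    have pu: "0 < p u" using False pnn[of u] by (cases "p u = 0") auto
    have wu: "0 < W u z" using False Wnn[of u z] by (cases "W u z = 0") auto
    have "p u * W u z \<le> r z" unfolding r_def
      by (rule member_le_sum[of u UNIV "\<lambda>u'. p u' * W u' z"]) (auto intro: mult_nonneg_nonneg pnn Wnn)
    then have rz: "0 < r z" using pu wu by (smt (verit) mult_pos_pos)
    show ?thesis using False pu wu rz by (simp add: psi_def log_divide algebra_simps)
  qed
  have "mutual_info p W = (\<Sum>u\<in>UNIV. \<Sum>z\<in>UNIV. p u * psi (W u z) - p u * W u z * log 2 (r z))"
    unfolding mutual_info_def r_def[symmetric] by (simp only: trm)
  also have "\<dots> = (\<Sum>u\<in>UNIV. p u * (\<Sum>z\<in>UNIV. psi (W u z))) - (\<Sum>u\<in>UNIV. \<Sum>z\<in>UNIV. p u * W u z * log 2 (r z))"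
    by (simp add: sum_subtractf sum_distrib_left)
  also have "(\<Sum>u\<in>UNIV. p u * (\<Sum>z\<in>UNIV. psi (W u z))) = K"
    by (simp add: K psum flip: sum_distrib_right)
  also have "(\<Sum>u\<in>UNIV. \<Sum>z\<in>UNIV. p u * W u z * log 2 (r z)) = (\<Sum>z\<in>UNIV. \<Sum>u\<in>UNIV. p u * W u z * log 2 (r z))"
    by (rule sum.swap)
  also have "\<dots> = (\<Sum>z\<in>UNIV. psi (r z))"
    by (rule sum.cong) (auto simp: psi_def r_def simp flip: sum_distrib_right)
  finally show ?thesis by (simp add: r_def)
qed

lemma gibbs:
  fixes r :: "'a::finite \<Rightarrow> real"
  assumes "is_distr r"
  shows "- (\<Sum>z\<in>UNIV. psi (r z)) \<le> log 2 (real (card (UNIV :: 'a set)))"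
proof -
  define N where "N = real (card (UNIV :: 'a set))"
  have N: "0 < N" by (simp add: N_def finite_UNIV_card_ge_0)
  have rnn: "\<And>z. 0 \<le> r z" and rs: "(\<Sum>z\<in>UNIV. r z) = 1" using assms by (auto simp: is_distr_def)
  have pt: "- psi (r z) - r z * log 2 N \<le> (1 / N - r z) / ln 2" for z
  proof (cases "r z = 0")
    case True then show ?thesis using N by (simp add: psi_def)
  next
    case False
    then have rp: "0 < r z" using rnn[of z] by simp
    have "ln (1 / (N * r z)) \<le> 1 / (N * r z) - 1"
      by (rule ln_le_minus_one) (use N rp in simp)
    then have "r z * ln (1 / (N * r z)) \<le> r z * (1 / (N * r z) - 1)"
      using rp by (simp add: mult_left_mono)
    also have "\<dots> = 1 / N - r z" using rp N by (simp add: field_simps)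
    finally have A: "r z * ln (1 / (N * r z)) \<le> 1 / N - r z" .
    have "- psi (r z) - r z * log 2 N = r z * ln (1 / (N * r z)) / ln 2"
      using rp N False by (simp add: psi_def log_def ln_div ln_mult field_simps)
    also have "\<dots> \<le> (1 / N - r z) / ln 2" using A by (simp add: divide_right_mono)
    finally show ?thesis .
  qed
  have "(\<Sum>z\<in>UNIV. - psi (r z) - r z * log 2 N) \<le> (\<Sum>z\<in>UNIV. (1 / N - r z) / ln 2)"
    by (rule sum_mono) (rule pt)
  also have "\<dots> = ((\<Sum>z::'a\<in>UNIV. 1 / N) - (\<Sum>z\<in>UNIV. r z)) / ln 2"
    by (simp add: sum_subtractf flip: sum_divide_distrib)
  also have "\<dots> = 0" using N by (simp add: rs N_def)
  finally have "(\<Sum>z\<in>UNIV. - psi (r z)) - log 2 N \<le> 0"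
    by (simp add: sum_subtractf rs flip: sum_distrib_right)
  then show ?thesis by (simp add: N_def sum_negf)
qed


definition hx :: "codon \<Rightarrow> codon \<Rightarrow> codon" where
  "hx u z = (case u of (u1, u2, u3) \<Rightarrow> case z of (z1, z2, z3) \<Rightarrow> (dx u1 z1, dx u2 z2, dx u3 z3))"

definition FF :: "real \<Rightarrow> real \<Rightarrow> nat \<Rightarrow> codon \<Rightarrow> real" where
  "FF q g m w = (case w of (a, b, c) \<Rightarrow> kimura_pow q g m A a * kimura_pow q g m A b * kimura_pow q g m A c)"

lemma cc_FF: "codon_channel q g m u z = FF q g m (hx u z)"
proof -
  obtain u1 u2 u3 where u: "u = (u1, u2, u3)" by (cases u) auto
  obtain z1 z2 z3 where z: "z = (z1, z2, z3)" by (cases z) auto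
  show ?thesis unfolding u z codon_channel_def hx_def FF_def prod.case
    by (simp only: kp_dx[of q g m u1 z1] kp_dx[of q g m u2 z2] kp_dx[of q g m u3 z3])
qed

lemma hx_inv: "hx u (hx u z) = z"
  by (cases u; cases z) (simp add: hx_def dx_inv)

lemma hx_comm: "hx u z = hx z u"
  by (cases u; cases z) (simp add: hx_def dx_comm)

lemma sum_hx: "(\<Sum>z\<in>UNIV. f (hx u z)) = (\<Sum>z\<in>UNIV. f z)"
  by (rule sum.reindex_bij_witness[of _ "hx u" "hx u"]) (auto simp: hx_inv)

lemma FF_sum: "(\<Sum>w\<in>UNIV. FF q g m w) = 1"
proof -
  have "(\<Sum>w\<in>UNIV. FF q g m w) = (\<Sum>a\<in>UNIV. \<Sum>b\<in>UNIV. \<Sum>c\<in>UNIV. kimura_pow q g m A a * kimura_pow q g m A b * kimura_pow q g m A c)"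
    unfolding FF_def UNIV_Times_UNIV[symmetric] sum.cartesian_product[symmetric] by simp
  also have "\<dots> = 1"
    by (simp add: kp_row flip: sum_distrib_left sum_distrib_right)
  finally show ?thesis .
qed

lemma card_codon: "card (UNIV :: codon set) = 64"
proof -
  have "card (UNIV :: base set) = 4" by (simp add: UNIV_base)
  then show ?thesis unfolding UNIV_Times_UNIV[symmetric] card_cartesian_product by simp
qed



lemma FF_nonneg: "0 \<le> q \<Longrightarrow> q \<le> 1 \<Longrightarrow> 0 \<le> g \<Longrightarrow> g \<le> 3/2 \<Longrightarrow> 0 \<le> FF q g m w"
  by (cases w) (auto simp: FF_def intro!: mult_nonneg_nonneg kp_nonneg)

lemma cc_nonneg: "0 \<le> q \<Longrightarrow> q \<le> 1 \<Longrightarrow> 0 \<le> g \<Longrightarrow> g \<le> 3/2 \<Longrightarrow> 0 \<le> codon_channel q g m u z"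
  by (simp add: cc_FF FF_nonneg)

lemma cc_row: "(\<Sum>z\<in>UNIV. codon_channel q g m u z) = 1"
  by (simp add: cc_FF sum_hx[of "FF q g m" u] FF_sum)

lemma cc_col: "(\<Sum>u\<in>UNIV. codon_channel q g m u z) = 1"
  by (simp add: cc_FF hx_comm[of _ z] sum_hx[of "FF q g m" z] FF_sum)

lemma cc_K: "(\<Sum>z\<in>UNIV. psi (codon_channel q g m u z)) = (\<Sum>z\<in>UNIV. psi (FF q g m z))"
  by (simp add: cc_FF sum_hx[of "\<lambda>w. psi (FF q g m w)" u])

definition p0 :: "codon \<Rightarrow> real" where "p0 u = 1 / 64"

lemma p0_distr: "is_distr p0"
  by (simp add: is_distr_def p0_def card_codon)

lemma mi_p0:
  assumes "0 \<le> q" "q \<le> 1" "0 \<le> g" "g \<le> 3/2"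
  shows "mutual_info p0 (codon_channel q g m) = (\<Sum>z\<in>UNIV. psi (FF q g m z)) + log 2 64"
proof -
  have "mutual_info p0 (codon_channel q g m) = (\<Sum>z\<in>UNIV. psi (FF q g m z)) - (\<Sum>z\<in>UNIV. psi (\<Sum>u'\<in>UNIV. p0 u' * codon_channel q g m u' z))"
    by (rule mi_formula) (auto simp: cc_nonneg[OF assms] cc_K p0_distr)
  also have "(\<Sum>z\<in>UNIV. psi (\<Sum>u'\<in>UNIV. p0 u' * codon_channel q g m u' z)) = (\<Sum>z::codon\<in>UNIV. psi (1/64))"
  proof (rule sum.cong)
    fix z :: codon
    have "(\<Sum>u'\<in>UNIV. p0 u' * codon_channel q g m u' z) = 1/64 * (\<Sum>u'\<in>UNIV. codon_channel q g m u' z)"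
      by (simp add: p0_def sum_distrib_left)
    then show "psi (\<Sum>u'\<in>UNIV. p0 u' * codon_channel q g m u' z) = psi (1/64)" by (simp only: cc_col) simp
  qed simp
  also have "\<dots> = - log 2 64"
    by (simp add: card_codon psi_def log_divide)
  finally show ?thesis by simp
qed

lemma mi_le:
  assumes "0 \<le> q" "q \<le> 1" "0 \<le> g" "g \<le> 3/2" and p: "is_distr p"
  shows "mutual_info p (codon_channel q g m) \<le> (\<Sum>z\<in>UNIV. psi (FF q g m z)) + log 2 64"
proof -
  define r where "r z = (\<Sum>u'\<in>UNIV. p u' * codon_channel q g m u' z)" for z
  have pnn: "\<And>u. 0 \<le> p u" and psum: "(\<Sum>u\<in>UNIV. p u) = 1" using p by (auto simp: is_distr_def)
  have "mutual_info p (codon_channel q g m) = (\<Sum>z\<in>UNIV. psi (FF q g m z)) - (\<Sum>z\<in>UNIV. psi (r z))"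
    unfolding r_def by (rule mi_formula) (auto simp: cc_nonneg[OF assms(1-4)] cc_K p)
  moreover have "is_distr r"
  proof -
    have "(\<Sum>z\<in>UNIV. r z) = (\<Sum>u'\<in>UNIV. p u' * (\<Sum>z\<in>UNIV. codon_channel q g m u' z))"
      unfolding r_def sum_distrib_left by (rule sum.swap)
    also have "\<dots> = 1" by (simp add: cc_row psum)
    finally show ?thesis unfolding is_distr_def r_def
      by (auto intro!: sum_nonneg mult_nonneg_nonneg pnn cc_nonneg assms)
  qed
  then have "- (\<Sum>z\<in>UNIV. psi (r z)) \<le> log 2 64" using gibbs[of r] by (simp add: card_codon)
  ultimately show ?thesis by simp
qed

fun wit :: "amino \<Rightarrow> codon" where
  "wit Ala = (G,C,A)" | "wit Arg = (C,G,A)" | "wit Asn = (A,A,C)" | "wit Asp = (G,A,C)"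
| "wit Cys = (T,G,C)" | "wit Gln = (C,A,A)" | "wit Glu = (G,A,A)" | "wit Gly = (G,G,A)"
| "wit His = (C,A,C)" | "wit Ile = (A,T,A)" | "wit Leu = (C,T,A)" | "wit Lys = (A,A,A)"
| "wit Met = (A,T,G)" | "wit Phe = (T,T,C)" | "wit Pro = (C,C,A)" | "wit Ser = (T,C,A)"
| "wit Thr = (A,C,A)" | "wit Trp = (T,G,G)" | "wit Tyr = (T,A,C)" | "wit Val = (G,T,A)"
| "wit Stp = (T,A,A)"

lemma alpha_wit: "alpha (wit x) = x" by (cases x) simp_all

lemma card_fibre_pos: "0 < card (fibre x)"
proof -
  have "wit x \<in> fibre x" by (simp add: fibre_def alpha_wit)
  then show ?thesis by (auto simp: card_gt_0_iff)
qed

lemma fibre_ne: "fibre x \<noteq> {}"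
  using card_fibre_pos[of x] by auto

definition c0 :: "amino \<Rightarrow> codon \<Rightarrow> real" where
  "c0 x u = (if alpha u = x then 1 / real (card (fibre x)) else 0)"

lemma c0_adm: "admissible_cond c0"
proof -
  have "(\<Sum>u\<in>fibre x. c0 x u) = 1" for x
  proof -
    have "(\<Sum>u\<in>fibre x. c0 x u) = (\<Sum>u\<in>fibre x. 1 / real (card (fibre x)))"
      by (rule sum.cong) (auto simp: c0_def fibre_def)
    also have "\<dots> = 1" using card_fibre_pos[of x] fibre_ne[of x] by simp
    finally show ?thesis .
  qed
  then show ?thesis unfolding admissible_cond_def by (auto simp: c0_def fibre_def)
qed

lemma c0_induced: "induced_codon_distr alpha_unif c0 = p0"
proof
  fix u
  show "induced_codon_distr alpha_unif c0 u = p0 u"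
    using card_fibre_pos[of "alpha u"] fibre_ne[of "alpha u"] by (simp add: induced_codon_distr_def alpha_unif_def c0_def p0_def)
qed

lemma induced_distr:
  assumes c: "admissible_cond c"
  shows "is_distr (induced_codon_distr alpha_unif c)"
proof -
  have cnn: "\<And>x u. 0 \<le> c x u" and cs: "\<And>x. (\<Sum>u\<in>fibre x. c x u) = 1"
    using c by (auto simp: admissible_cond_def)
  have "(\<Sum>u\<in>UNIV. induced_codon_distr alpha_unif c u)
      = (\<Sum>y\<in>UNIV. \<Sum>u\<in>{u. u \<in> UNIV \<and> alpha u = y}. induced_codon_distr alpha_unif c u)"
    by (rule sum.group[symmetric]) auto
  also have "\<dots> = (\<Sum>y\<in>UNIV. alpha_unif y * (\<Sum>u\<in>fibre y. c y u))"
    by (rule sum.cong) (auto simp: fibre_def induced_codon_distr_def sum_distrib_left intro!: sum.cong)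
  also have "\<dots> = (\<Sum>y\<in>UNIV. real (card (fibre y))) / 64"
    by (simp add: cs alpha_unif_def sum_divide_distrib)
  also have "(\<Sum>y\<in>UNIV. real (card (fibre y))) = real (\<Sum>y\<in>UNIV. card {u. u \<in> (UNIV::codon set) \<and> alpha u = y})"
    by (simp add: fibre_def)
  also have "(\<Sum>y\<in>UNIV. card {u. u \<in> (UNIV::codon set) \<and> alpha u = y}) = (\<Sum>y\<in>UNIV. \<Sum>u\<in>{u. u \<in> (UNIV::codon set) \<and> alpha u = y}. 1)"
    by simp
  also have "\<dots> = (\<Sum>u\<in>(UNIV::codon set). 1)"
    by (rule sum.group) auto
  also have "\<dots> = 64" by (simp add: card_codon)
  finally have "(\<Sum>u\<in>UNIV. induced_codon_distr alpha_unif c u) = 1" by simp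
  moreover have "0 \<le> induced_codon_distr alpha_unif c u" for u
    by (simp add: induced_codon_distr_def alpha_unif_def cnn)
  ultimately show ?thesis by (simp add: is_distr_def)
qed

theorem lemma2:
  fixes q \<gamma> :: real and m :: nat
  assumes "0 \<le> q" "q \<le> 1" "0 \<le> \<gamma>" "\<gamma> \<le> 3 / 2" "1 \<le> m"
  shows "achievable_rate q \<gamma> m alpha_unif = capacity_nc q \<gamma> m - entropy2 alpha_unif"
proof -
  define V where "V = (\<Sum>z\<in>UNIV. psi (FF q \<gamma> m z)) + log 2 64"
  have cap: "capacity_nc q \<gamma> m = V"
    unfolding capacity_nc_def
  proof (rule cSup_eq_maximum)
    show "V \<in> (\<lambda>p. mutual_info p (codon_channel q \<gamma> m)) ` {p. is_distr p}"
      using mi_p0[OF assms(1-4), of m] p0_distr unfolding V_def by (auto intro!: image_eqI[of _ _ p0])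
    show "x \<le> V" if "x \<in> (\<lambda>p. mutual_info p (codon_channel q \<gamma> m)) ` {p. is_distr p}" for x
      using that mi_le[OF assms(1-4)] unfolding V_def by auto
  qed
  have ach: "(SUP c\<in>{c. admissible_cond c}. mutual_info (induced_codon_distr alpha_unif c) (codon_channel q \<gamma> m)) = V"
  proof (rule cSup_eq_maximum)
    show "V \<in> (\<lambda>c. mutual_info (induced_codon_distr alpha_unif c) (codon_channel q \<gamma> m)) ` {c. admissible_cond c}"
      using mi_p0[OF assms(1-4), of m] c0_adm c0_induced unfolding V_def by (auto intro!: image_eqI[of _ _ c0])
    show "x \<le> V" if "x \<in> (\<lambda>c. mutual_info (induced_codon_distr alpha_unif c) (codon_channel q \<gamma> m)) ` {c. admissible_cond c}" for x
      using that mi_le[OF assms(1-4) induced_distr] unfolding V_def by auto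
  qed
  show ?thesis unfolding achievable_rate_def ach cap ..
qed

end
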